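(* For all integers $n\ge 1$ and $m\ge 2$, \[ {n+m\brack m}-q^{n}{n+m-2\brack m-2}=K_q(n+m-1,m). \]
   Context: For integers $n\ge m\ge 0$ the Gaussian polynomial is ${n\brack m}=\prod_{i=0}^{m-1}\frac{1-q^{n-i}}{1-q^{m-i}}$. For $n\geq 1$ and $0\le m\le n$, the $q$-Kaplansky number is $K_q(n,m)=\frac{1-q^{n+m}}{1-q^{n}}{n\brack m}$. *)

theory Defs
  imports "HOL-Computational_Algebra.Polynomial" "HOL-Computational_Algebra.Fraction_Field"
begin

text \<open>We work in the field of rational functions Q(q), realised as the fraction
field of rat poly; the indeterminate q is the image of [:0,1:].\<close>

type_synonym ratfun = "rat poly fract"

definition qvar :: ratfun where
  "qvar = Fract [:0, 1:] 1"

definition gauss :: "nat \<Rightarrow> nat \<Rightarrow> ratfun" where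
  "gauss n m = (\<Prod>i<m. (1 - qvar ^ (n - i)) / (1 - qvar ^ (m - i)))"

definition qkap :: "nat \<Rightarrow> nat \<Rightarrow> ratfun" where
  "qkap n m = (1 - qvar ^ (n + m)) / (1 - qvar ^ n) * gauss n m"

end

theory Submission
  imports Defs
begin

definition br :: "nat \<Rightarrow> ratfun" where "br j = 1 - qvar ^ j"
definition NN :: "nat \<Rightarrow> nat \<Rightarrow> ratfun" where "NN a k = (\<Prod>i<k. br (a - i))"
definition DD :: "nat \<Rightarrow> ratfun" where "DD k = (\<Prod>i<k. br (k - i))"

lemma qvar_pow: "qvar ^ j = Fract (monom 1 j) 1"
proof (induction j)
  case 0 then show ?case by (simp add: One_fract_def)
next
  case (Suc j) then show ?case
    by (simp add: qvar_def mult_monom monom_Suc)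
qed

lemma br_nz: "j \<ge> 1 \<Longrightarrow> br j \<noteq> 0"
proof
  assume j: "j \<ge> 1" and "br j = 0"
  have "br j = Fract (1 - monom 1 j) 1"
    by (simp add: br_def qvar_pow One_fract_def)
  hence "Fract (1 - monom 1 j) 1 = (0::ratfun)" using \<open>br j = 0\<close> by simp
  hence "(1 - monom 1 j :: rat poly) = 0" by (simp add: Zero_fract_def eq_fract)
  hence "coeff (1 - monom 1 j :: rat poly) j = 0" by simp
  thus False using j by (simp add: coeff_1)
qed

lemma gauss_eq: "gauss a k = NN a k / DD k"
  unfolding gauss_def NN_def DD_def br_def by (simp add: prod_dividef)

lemma NN_shift: "NN (a+1) k * br (a+1-k) = NN a k * br (a+1)"
proof (induction k)
  case 0 then show ?case by (simp add: NN_def)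
next
  case (Suc k)
  have "NN (a+1) (Suc k) * br (a+1 - Suc k) = (NN (a+1) k * br (a+1-k)) * br (a-k)"
    by (simp add: NN_def)
  also have "\<dots> = NN a k * br (a-k) * br (a+1)" using Suc by simp
  also have "\<dots> = NN a (Suc k) * br (a+1)" by (simp add: NN_def)
  finally show ?case .
qed

lemma NN2: "NN (a+2) (k+2) = br (a+2) * br (a+1) * NN a k"
  unfolding NN_def by (simp del: prod.lessThan_Suc add: prod.lessThan_Suc_shift)

lemma DD2: "DD (k+2) = br (k+2) * br (k+1) * DD k"
  unfolding DD_def by (simp del: prod.lessThan_Suc add: prod.lessThan_Suc_shift)

lemma DD_nz: "DD k \<noteq> 0"
  unfolding DD_def by (auto intro!: br_nz)

lemma key:
  "br (n+k+2) * br (n+k+1) - qvar^n * br (k+2) * br (k+1) = br (n+2*k+3) * br n"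
proof -
  have e1: "qvar^(n+k+2) = qvar^n*qvar^k*qvar^2" "qvar^(n+k+1) = qvar^n*qvar^k*qvar"
    "qvar^(k+2) = qvar^k*qvar^2" "qvar^(k+1) = qvar^k*qvar"
    "qvar^(n+2*k+3) = qvar^n*qvar^k*qvar^k*qvar^3"
  proof -
    have a: "n+2*k+3 = n+k+k+3" by simp
    show "qvar^(n+k+2) = qvar^n*qvar^k*qvar^2" "qvar^(n+k+1) = qvar^n*qvar^k*qvar"
      "qvar^(k+2) = qvar^k*qvar^2" "qvar^(k+1) = qvar^k*qvar"
      "qvar^(n+2*k+3) = qvar^n*qvar^k*qvar^k*qvar^3"
      unfolding a by (simp_all only: power_add power_one_right)
  qed
  show ?thesis unfolding br_def e1 by (simp add: algebra_simps power2_eq_square power3_eq_cube)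
qed

theorem mainTheorem4:
  fixes n m :: nat
  assumes "n \<ge> 1" and "m \<ge> 2"
  shows "gauss (n + m) m - qvar ^ n * gauss (n + m - 2) (m - 2) = qkap (n + m - 1) m"
proof -
  obtain k where m: "m = k + 2" using assms(2) by (metis add.commute le_Suc_ex)
  obtain p where n: "n = p + 1" using assms(1) by (metis add.commute le_Suc_ex)
  define N' where "N' = NN (p+k) k"
  have h1: "NN (n+k) k * br n = N' * br (n+k)"
    using NN_shift[of "p+k" k] unfolding N'_def n by (simp add: algebra_simps)
  have g1: "gauss (n+m) m = br (n+k+2) * br (n+k+1) * NN (n+k) k / (br (k+2) * br (k+1) * DD k)"
    unfolding gauss_eq m using NN2[of "n+k" k] DD2[of k] by (simp add: algebra_simps)
  have g2: "gauss (n+m-2) (m-2) = NN (n+k) k / DD k"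
    unfolding gauss_eq m by simp
  have NNb: "NN (n+k+1) (k+2) = br (n+k+1) * br (n+k) * N'"
    using NN2[of "p+k" k] unfolding N'_def n by (simp add: algebra_simps)
  have g3: "qkap (n+m-1) m = br (n+2*k+3) / br (n+k+1) *
      (br (n+k+1) * br (n+k) * N' / (br (k+2) * br (k+1) * DD k))"
  proof -
    have a: "n+m-1+m = n+2*k+3" "n+m-1 = n+k+1" unfolding m by simp_all
    have b: "qkap (n+m-1) m = br (n+2*k+3)/br(n+k+1) * gauss (n+k+1) (k+2)"
    proof -
      have e: "n + k + 1 + (k+2) = n+2*k+3" "n+(k+2)-1 = n+k+1" by simp_all
      show ?thesis unfolding qkap_def m br_def e ..
    qed
    show ?thesis unfolding b gauss_eq NNb DD2 ..
  qed
  have nz: "br n \<noteq> 0" "br (n+k+1) \<noteq> 0" "br (k+2) \<noteq> 0" "br (k+1) \<noteq> 0"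
    using assms(1) by (auto intro!: br_nz)
  have NNe: "NN (n+k) k = N' * br (n+k) / br n" using h1 nz by (simp add: field_simps)
  show ?thesis
    unfolding g1 g2 g3 NNe using nz DD_nz[of k] key[of n k]
    by (simp add: field_simps)
qed

end
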